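(* Let $P=\{x\in\mathbb R^3:(a^i)^\intercal x\le b_i,\ 1\le i\le n\}$ be a 3-dimensional polytope centrally symmetric with respect to the origin, each inequality defining a facet $F_i$ with supporting hyperplane $H_i$. Let $j\in\{1,2,3\}$, let $k=6$ if $j\le2$ and $k=7$ if $j=3$, and let $H_{l_1},\dots,H_{l_k}$ be facet hyperplanes of $P$. Let $A$ be an affine subspace of $\mathcal S_{H_{l_1},\dots,H_{l_k}}$, given as $A=\{C+\sum_{i=1}^r\lambda_iM_i:\lambda\in\mathbb R^r\}$ with $C,M_i\in\mathbb R^{3\times3}$. There exists an algorithm which either finds $W\in A$ such that: if $j=1$, $\mathcal U^1_W\subset\mathrm{bd}(P)$ and $(-1,1,1)_W,(1,-1,1)_W,(1,1,-1)_W\notin\mathrm{int}(P)$; if $j=2$, $\mathcal U^2_W\subset\mathrm{bd}(P)$ and $(1,1,1)_W\notin\mathrm{int}(P)$; if $j=3$, $\mathcal U^3_W\subset\mathrm{bd}(P)$ (and hence $W\mathbb Z^3$ is admissible for $P$) — or asserts that no such $W\in A$ exists.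
   Context: For $W=(w^1,w^2,w^3)\in\mathbb R^{3\times3}$ and $x\in\mathbb R^3$, $(x_1,x_2,x_3)_W=x_1w^1+x_2w^2+x_3w^3$. Test sets: $\mathcal U^1_W=\{(1,0,0)_W,(0,1,0)_W,(0,0,1)_W,(0,1,-1)_W,(-1,0,1)_W,(1,-1,0)_W\}$; $\mathcal U^2_W=\{(1,0,0)_W,(0,1,0)_W,(0,0,1)_W,(0,1,1)_W,(1,0,1)_W,(1,1,0)_W\}$; $\mathcal U^3_W=\mathcal U^2_W\cup\{(1,1,1)_W\}$; list the elements of $\mathcal U^j_W$ in this order as $u^1_W,\dots,u^k_W$. $\mathcal S_{H_{l_1},\dots,H_{l_k}}=\{W\in\mathbb R^{3\times3}: u^i_W\in H_{l_i},\ 1\le i\le k\}$ (with the test set of kind $j$). A lattice $\Lambda$ is admissible for $P$ if $\mathrm{int}(P)\cap\Lambda=\{0\}$. Algorithms operate exactly on real numbers (linear programming feasibility available). *)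

theory Defs
  imports "HOL-Analysis.Analysis"
begin

text \<open>Coordinates with respect to W: (x1,x2,x3)_W = x1 w1 + x2 w2 + x3 w3,
  where w1, w2, w3 are the columns of W. This is W *v x.\<close>

definition ivec :: "int \<times> int \<times> int \<Rightarrow> real^3" where
  "ivec e = (case e of (x1, x2, x3) \<Rightarrow> vector [of_int x1, of_int x2, of_int x3])"

definition coordW :: "real^3^3 \<Rightarrow> int \<times> int \<times> int \<Rightarrow> real^3" where
  "coordW W e = W *v ivec e"

text \<open>Test sets (as lists of coefficient triples, in the order of the paper).\<close>

definition testset :: "nat \<Rightarrow> (int \<times> int \<times> int) list" where
  "testset j =
    (if j = 1 then [(1,0,0),(0,1,0),(0,0,1),(0,1,-1),(-1,0,1),(1,-1,0)]
     else if j = 2 then [(1,0,0),(0,1,0),(0,0,1),(0,1,1),(1,0,1),(1,1,0)]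
     else [(1,0,0),(0,1,0),(0,0,1),(0,1,1),(1,0,1),(1,1,0),(1,1,1)])"

definition testk :: "nat \<Rightarrow> nat" where
  "testk j = (if j \<le> 2 then 6 else 7)"

definition polyP :: "nat \<Rightarrow> (nat \<Rightarrow> real^3) \<Rightarrow> (nat \<Rightarrow> real) \<Rightarrow> (real^3) set" where
  "polyP n a b = {x. \<forall>i<n. a i \<bullet> x \<le> b i}"

definition hypH :: "(nat \<Rightarrow> real^3) \<Rightarrow> (nat \<Rightarrow> real) \<Rightarrow> nat \<Rightarrow> (real^3) set" where
  "hypH a b i = {x. a i \<bullet> x = b i}"

definition Sset :: "nat \<Rightarrow> (nat \<Rightarrow> real^3) \<Rightarrow> (nat \<Rightarrow> real) \<Rightarrow> (nat \<Rightarrow> nat) \<Rightarrow> (real^3^3) set" where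
  "Sset j a b l = {W. \<forall>i<testk j. coordW W (testset j ! i) \<in> hypH a b (l i)}"

definition affpt :: "real^3^3 \<Rightarrow> (nat \<Rightarrow> real^3^3) \<Rightarrow> nat \<Rightarrow> (nat \<Rightarrow> real) \<Rightarrow> real^3^3" where
  "affpt C M r lam = C + (\<Sum>m<r. lam m *\<^sub>R M m)"

definition goodW :: "nat \<Rightarrow> (real^3) set \<Rightarrow> real^3^3 \<Rightarrow> bool" where
  "goodW j P W =
    ((\<forall>e \<in> set (testset j). coordW W e \<in> frontier P) \<and>
     (j = 1 \<longrightarrow> coordW W (-1,1,1) \<notin> interior P \<and> coordW W (1,-1,1) \<notin> interior P
                \<and> coordW W (1,1,-1) \<notin> interior P) \<and>
     (j = 2 \<longrightarrow> coordW W (1,1,1) \<notin> interior P))"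

text \<open>Model of the algorithm: finitely many LP feasibility tests. A linear constraint
  on the parameter lambda is a rw (i, e, s) meaning a_i . (e)_W <= b_i if s, and
  a_i . (e)_W >= b_i if not s, with W = C + sum lambda_m M_m (affine in lambda).\<close>

definition rowHolds :: "(nat \<Rightarrow> real^3) \<Rightarrow> (nat \<Rightarrow> real) \<Rightarrow> real^3^3
    \<Rightarrow> nat \<times> (int \<times> int \<times> int) \<times> bool \<Rightarrow> bool" where
  "rowHolds a b W rw = (case rw of (i, e, s) \<Rightarrow>
     (if s then a i \<bullet> coordW W e \<le> b i else a i \<bullet> coordW W e \<ge> b i))"

end

theory Submission
  imports Defs
begin

definition extras :: "nat \<Rightarrow> (int \<times> int \<times> int) set" where
  "extras j = (if j = 1 then {(-1,1,1),(1,-1,1),(1,1,-1)} else if j = 2 then {(1,1,1)} else {})"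

lemma a_nonzero:
  assumes "(polyP n a b \<inter> hypH a b i) facet_of polyP n a b"
  shows "a i \<noteq> 0"
proof
  assume z: "a i = 0"
  show False
  proof (cases "b i = 0")
    case True
    then have "polyP n a b \<inter> hypH a b i = polyP n a b" using z by (auto simp: hypH_def)
    with assms show False by (simp add: facet_of_def)
  next
    case False
    then have "polyP n a b \<inter> hypH a b i = {}" using z by (auto simp: hypH_def)
    with assms show False by (simp add: facet_of_def)
  qed
qed

lemma interior_char:
  assumes nz: "\<forall>i<n. a i \<noteq> 0"
  shows "interior (polyP n a b) = {x. \<forall>i<n. a i \<bullet> x < b i}"
proof
  show "{x. \<forall>i<n. a i \<bullet> x < b i} \<subseteq> interior (polyP n a b)"
  proof (rule interior_maximal)
    show "{x. \<forall>i<n. a i \<bullet> x < b i} \<subseteq> polyP n a b" by (auto simp: polyP_def less_imp_le)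
    have "{x. \<forall>i<n. a i \<bullet> x < b i} = (\<Inter>i\<in>{..<n}. {x. a i \<bullet> x < b i})" by auto
    also have "open \<dots>" by (intro open_INT) (auto simp: open_halfspace_lt)
    finally show "open {x. \<forall>i<n. a i \<bullet> x < b i}" .
  qed
next
  show "interior (polyP n a b) \<subseteq> {x. \<forall>i<n. a i \<bullet> x < b i}"
  proof
    fix x assume x: "x \<in> interior (polyP n a b)"
    then obtain e where e: "e > 0" "ball x e \<subseteq> polyP n a b" by (meson mem_interior)
    have "a i \<bullet> x < b i" if i: "i < n" for i
    proof -
      have na: "norm (a i) > 0" using nz i by auto
      define y where "y = x + ((e/2) / norm (a i)) *\<^sub>R a i"
      have "dist x y = e/2" using na e by (simp add: y_def dist_norm)
      then have "y \<in> polyP n a b" using e by auto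
      then have "a i \<bullet> y \<le> b i" using i by (auto simp: polyP_def)
      moreover have "a i \<bullet> y = a i \<bullet> x + (e/2) * norm (a i)"
        using na by (simp add: y_def inner_add_right power2_norm_eq_inner[symmetric] power2_eq_square)
      moreover have "0 < (e/2) * norm (a i)" using na e(1) by simp
      ultimately show ?thesis by linarith
    qed
    then show "x \<in> {x. \<forall>i<n. a i \<bullet> x < b i}" by auto
  qed
qed

lemma closed_polyP: "closed (polyP n a b)"
proof -
  have "polyP n a b = (\<Inter>i\<in>{..<n}. {x. a i \<bullet> x \<le> b i})" by (auto simp: polyP_def)
  also have "closed \<dots>" by (intro closed_INT) (auto simp: closed_halfspace_le)
  finally show ?thesis .
qed

lemma goodW_char:
  assumes nz: "\<forall>i<n. a i \<noteq> 0"
  shows "goodW j (polyP n a b) W \<longleftrightarrow>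
    (\<forall>e\<in>set (testset j). (\<forall>i<n. a i \<bullet> coordW W e \<le> b i) \<and> (\<exists>i<n. a i \<bullet> coordW W e \<ge> b i)) \<and>
    (\<forall>e\<in>extras j. \<exists>i<n. a i \<bullet> coordW W e \<ge> b i)"
proof -
  have int: "x \<notin> interior (polyP n a b) \<longleftrightarrow> (\<exists>i<n. a i \<bullet> x \<ge> b i)" for x
    using interior_char[OF nz] by (auto simp: not_less)
  have fr: "x \<in> frontier (polyP n a b) \<longleftrightarrow> (\<forall>i<n. a i \<bullet> x \<le> b i) \<and> (\<exists>i<n. a i \<bullet> x \<ge> b i)" for x
    using int[of x] closed_polyP[of n a b] by (auto simp: frontier_def polyP_def)
  show ?thesis unfolding goodW_def extras_def using fr int by auto
qed

theorem lemma4p16: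
  fixes n j r :: nat and l :: "nat \<Rightarrow> nat"
  assumes "j \<in> {1, 2, 3}"
  shows "\<exists>(\<F> :: (nat \<times> (int \<times> int \<times> int) \<times> bool) set set).
     finite \<F> \<and> (\<forall>S\<in>\<F>. finite S) \<and>
     (\<forall>(a :: nat \<Rightarrow> real^3) (b :: nat \<Rightarrow> real) (C :: real^3^3) (M :: nat \<Rightarrow> real^3^3).
        polytope (polyP n a b) \<and> aff_dim (polyP n a b) = 3 \<and>
        (\<forall>x \<in> polyP n a b. - x \<in> polyP n a b) \<and>
        (\<forall>i<n. (polyP n a b \<inter> hypH a b i) facet_of polyP n a b) \<and>
        (\<forall>i<testk j. l i < n) \<and>
        (\<forall>lam. affpt C M r lam \<in> Sset j a b l)
      \<longrightarrow> {lam. goodW j (polyP n a b) (affpt C M r lam)}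
          = (\<Union>S\<in>\<F>. {lam. \<forall>rw\<in>S. rowHolds a b (affpt C M r lam) rw}))"
proof -
  define E where "E = set (testset j) \<union> extras j"
  define U :: "(nat \<times> (int \<times> int \<times> int) \<times> bool) set" where "U = {..<n} \<times> E \<times> UNIV"
  define base :: "(nat \<times> (int \<times> int \<times> int) \<times> bool) set" where "base = {..<n} \<times> set (testset j) \<times> {True}"
  define F where "F = {S. S \<subseteq> U \<and> base \<subseteq> S \<and> (\<forall>e\<in>E. \<exists>i<n. (i, e, False) \<in> S)}"
  have finU: "finite U" unfolding U_def E_def extras_def by auto
  have finF: "finite F" using finU unfolding F_def
    by (rule finite_subset[rotated, OF finite_Pow_iff[THEN iffD2]]) auto
  have finS: "\<forall>S\<in>F. finite S" using finU unfolding F_def by (auto intro: finite_subset)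
  show ?thesis
  proof (intro exI[of _ F] conjI finF finS allI impI)
    fix a :: "nat \<Rightarrow> real^3" and b C M
    assume H: "polytope (polyP n a b) \<and> aff_dim (polyP n a b) = 3 \<and>
        (\<forall>x \<in> polyP n a b. - x \<in> polyP n a b) \<and>
        (\<forall>i<n. (polyP n a b \<inter> hypH a b i) facet_of polyP n a b) \<and>
        (\<forall>i<testk j. l i < n) \<and>
        (\<forall>lam. affpt C M r lam \<in> Sset j a b l)"
    then have nz: "\<forall>i<n. a i \<noteq> 0" using a_nonzero by blast
    show "{lam. goodW j (polyP n a b) (affpt C M r lam)}
          = (\<Union>S\<in>F. {lam. \<forall>rw\<in>S. rowHolds a b (affpt C M r lam) rw})"
    proof (intro set_eqI iffI)
      fix lam assume "lam \<in> {lam. goodW j (polyP n a b) (affpt C M r lam)}"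
      then have g: "goodW j (polyP n a b) (affpt C M r lam)" by simp
      define W where "W = affpt C M r lam"
      define S where "S = base \<union> {(i, e, False) | i e. i < n \<and> e \<in> E \<and> a i \<bullet> coordW W e \<ge> b i}"
      have gc: "(\<forall>e\<in>set (testset j). (\<forall>i<n. a i \<bullet> coordW W e \<le> b i) \<and> (\<exists>i<n. a i \<bullet> coordW W e \<ge> b i)) \<and>
        (\<forall>e\<in>extras j. \<exists>i<n. a i \<bullet> coordW W e \<ge> b i)"
        using g goodW_char[OF nz] unfolding W_def by blast
      have "S \<in> F" unfolding F_def S_def using gc by (auto simp: U_def base_def E_def)
      moreover have "\<forall>rw\<in>S. rowHolds a b W rw"
        unfolding S_def base_def using gc by (auto simp: rowHolds_def)
      ultimately show "lam \<in> (\<Union>S\<in>F. {lam. \<forall>rw\<in>S. rowHolds a b (affpt C M r lam) rw})"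
        unfolding W_def by blast
    next
      fix lam assume "lam \<in> (\<Union>S\<in>F. {lam. \<forall>rw\<in>S. rowHolds a b (affpt C M r lam) rw})"
      then obtain S where S: "S \<in> F" "\<forall>rw\<in>S. rowHolds a b (affpt C M r lam) rw" by blast
      define W where "W = affpt C M r lam"
      have b1: "a i \<bullet> coordW W e \<le> b i" if "i < n" "e \<in> set (testset j)" for i e
      proof -
        have "(i, e, True) \<in> S" using S(1) that unfolding F_def base_def by auto
        then show ?thesis using S(2) unfolding W_def rowHolds_def by fastforce
      qed
      have b2: "\<exists>i<n. a i \<bullet> coordW W e \<ge> b i" if eE: "e \<in> E" for e
      proof -
        obtain i where "i < n" "(i, e, False) \<in> S" using S(1) eE unfolding F_def by blast
        then show ?thesis using S(2) unfolding W_def rowHolds_def by fastforce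
      qed
      have "goodW j (polyP n a b) W"
        using goodW_char[OF nz] b1 b2 unfolding E_def by blast
      then show "lam \<in> {lam. goodW j (polyP n a b) (affpt C M r lam)}" unfolding W_def by simp
    qed
  qed
qed

end
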